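(* Let $G$ be a finite perfect graph, and let $f$ be a positive real-valued function on the set of pairs $(H,v)$ where $H$ is an induced subgraph of $G$ and $v\in V(H)$. Assume that: (i) $f(H,v)\le f(G[V(H)\cup\{w\}],v)$ for every induced subgraph $H$ of $G$, every $v\in V(H)$ and every $w\in V(G)\setminus V(H)$; (ii) for every induced subgraph $H$ of $G$ whose vertex set is an independent set of $G$, $\sum_{v\in V(H)}\frac{1}{f(H,v)}\le 1$. For an induced subgraph $H$ of $G$ and $v\in V(H)$, let $c(H,v)$ be the size of the largest clique of $H$ containing $v$. Then for every induced subgraph $H$ of $G$, \[ \sum_{v\in V(H)}\frac{1}{f(H,v)\,c(H,v)}\le 1. \]
   Context: A graph $G$ is perfect if for every induced subgraph its chromatic number equals its clique number. $G[S]$ denotes the subgraph of $G$ induced by the vertex set $S$. *)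

theory Defs
  imports Main "HOL.Real"
begin

text \<open>Finite simple graph: finite vertex set V, symmetric irreflexive edge relation E
  on V. Induced subgraphs G[S] are identified with their vertex sets S \<subseteq> V.\<close>

definition simple_graph :: "'a set \<Rightarrow> ('a \<Rightarrow> 'a \<Rightarrow> bool) \<Rightarrow> bool" where
  "simple_graph V E \<longleftrightarrow> finite V \<and> (\<forall>x y. E x y \<longrightarrow> x \<in> V \<and> y \<in> V)
     \<and> (\<forall>x y. E x y \<longrightarrow> E y x) \<and> (\<forall>x. \<not> E x x)"

definition is_clique :: "('a \<Rightarrow> 'a \<Rightarrow> bool) \<Rightarrow> 'a set \<Rightarrow> bool" where
  "is_clique E K \<longleftrightarrow> (\<forall>x\<in>K. \<forall>y\<in>K. x \<noteq> y \<longrightarrow> E x y)"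

definition is_independent :: "('a \<Rightarrow> 'a \<Rightarrow> bool) \<Rightarrow> 'a set \<Rightarrow> bool" where
  "is_independent E I \<longleftrightarrow> (\<forall>x\<in>I. \<forall>y\<in>I. \<not> E x y)"

definition clique_number :: "('a \<Rightarrow> 'a \<Rightarrow> bool) \<Rightarrow> 'a set \<Rightarrow> nat" where
  "clique_number E S = Max {card K | K. K \<subseteq> S \<and> is_clique E K}"

definition proper_colouring :: "('a \<Rightarrow> 'a \<Rightarrow> bool) \<Rightarrow> 'a set \<Rightarrow> nat \<Rightarrow> ('a \<Rightarrow> nat) \<Rightarrow> bool" where
  "proper_colouring E S k col \<longleftrightarrow> (\<forall>x\<in>S. col x < k) \<and>
     (\<forall>x\<in>S. \<forall>y\<in>S. E x y \<longrightarrow> col x \<noteq> col y)"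

definition chromatic_number :: "('a \<Rightarrow> 'a \<Rightarrow> bool) \<Rightarrow> 'a set \<Rightarrow> nat" where
  "chromatic_number E S = (LEAST k. \<exists>col. proper_colouring E S k col)"

definition perfect :: "'a set \<Rightarrow> ('a \<Rightarrow> 'a \<Rightarrow> bool) \<Rightarrow> bool" where
  "perfect V E \<longleftrightarrow> (\<forall>S. S \<subseteq> V \<longrightarrow> chromatic_number E S = clique_number E S)"

definition max_clique_at :: "('a \<Rightarrow> 'a \<Rightarrow> bool) \<Rightarrow> 'a set \<Rightarrow> 'a \<Rightarrow> nat" where
  "max_clique_at E S v = Max {card K | K. K \<subseteq> S \<and> v \<in> K \<and> is_clique E K}"

end

theory Submission
  imports Defs
begin

definition Om :: "'a set \<Rightarrow> ('a \<Rightarrow> 'a \<Rightarrow> bool) \<Rightarrow> ('a \<Rightarrow> nat) \<Rightarrow> nat" where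
  "Om V E w = Max {(\<Sum>u\<in>K. w u) | K. K \<subseteq> V \<and> is_clique E K}"

definition cover :: "('a \<Rightarrow> 'a \<Rightarrow> bool) \<Rightarrow> ('a \<Rightarrow> nat) \<Rightarrow> nat \<Rightarrow> (nat \<Rightarrow> 'a set) \<Rightarrow> bool" where
  "cover E w m I \<longleftrightarrow> (\<forall>j<m. I j \<subseteq> {v. 0 < w v} \<and> is_independent E (I j)) \<and>
     (\<forall>v. w v \<le> card {j. j < m \<and> v \<in> I j})"

lemma Om_fin: "finite V \<Longrightarrow> finite {(\<Sum>u\<in>K. w u) | K. K \<subseteq> V \<and> is_clique E K}"
proof -
  assume "finite V"
  have "{(\<Sum>u\<in>K. w u) | K. K \<subseteq> V \<and> is_clique E K} \<subseteq> (\<lambda>K. \<Sum>u\<in>K. w u) ` Pow V" by auto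
  then show ?thesis using \<open>finite V\<close> finite_subset by blast
qed

lemma Om_ge: "finite V \<Longrightarrow> K \<subseteq> V \<Longrightarrow> is_clique E K \<Longrightarrow> (\<Sum>u\<in>K. w u) \<le> Om V E w"
  unfolding Om_def by (rule Max_ge[OF Om_fin]) auto

lemma Om_le: "finite V \<Longrightarrow> (\<And>K. K \<subseteq> V \<Longrightarrow> is_clique E K \<Longrightarrow> (\<Sum>u\<in>K. w u) \<le> m) \<Longrightarrow> Om V E w \<le> m"
proof -
  assume f: "finite V" and h: "\<And>K. K \<subseteq> V \<Longrightarrow> is_clique E K \<Longrightarrow> (\<Sum>u\<in>K. w u) \<le> m"
  have ne: "{(\<Sum>u\<in>K. w u) | K. K \<subseteq> V \<and> is_clique E K} \<noteq> {}"
    by (auto simp: is_clique_def intro!: exI[of _ "{}"])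
  show ?thesis unfolding Om_def
    by (rule Max.boundedI[OF Om_fin[OF f] ne]) (use h in auto)
qed

lemma clique_indep_card: "is_clique E K \<Longrightarrow> is_independent E A \<Longrightarrow> finite K \<Longrightarrow> card (K \<inter> A) \<le> 1"
  using card_le_Suc0_iff_eq[of "K \<inter> A"] unfolding is_clique_def is_independent_def by auto

lemma count_swap: fixes m :: nat shows "finite K \<Longrightarrow> (\<Sum>u\<in>K. card {j. j<m \<and> u \<in> I j}) = (\<Sum>j<m. card (K \<inter> I j))"
proof -
  assume fK: "finite K"
  have a: "card {j. j<m \<and> u \<in> I j} = (\<Sum>j<m. if u \<in> I j then 1 else 0)" for u
  proof -
    have "{j. j<m \<and> u \<in> I j} = {j\<in>{..<m}. u \<in> I j}" by auto
    then have "card {j. j<m \<and> u \<in> I j} = (\<Sum>j\<in>{j\<in>{..<m}. u \<in> I j}. 1)" by simp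
    also have "\<dots> = (\<Sum>j<m. if u \<in> I j then 1 else 0)" by (rule sum.inter_filter) (rule finite_lessThan)
    finally show ?thesis .
  qed
  have b: "card (K \<inter> I j) = (\<Sum>u\<in>K. if u \<in> I j then 1 else 0)" for j
    using fK by (simp add: sum.If_cases)
  show ?thesis unfolding a b by (rule sum.swap)
qed

lemma count_swap_real: fixes m :: nat shows "finite K \<Longrightarrow> (\<And>j. j < m \<Longrightarrow> I j \<subseteq> K) \<Longrightarrow>
   (\<Sum>u\<in>K. g u * real (card {j. j<m \<and> u \<in> I j})) = (\<Sum>j<m. \<Sum>u\<in>I j. (g u :: real))"
proof -
  assume fK: "finite K" and sub: "\<And>j. j < m \<Longrightarrow> I j \<subseteq> K"
  have a: "g u * real (card {j. j<m \<and> u \<in> I j}) = (\<Sum>j<m. if u \<in> I j then g u else 0)" for u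
  proof -
    have "{j. j<m \<and> u \<in> I j} = {j\<in>{..<m}. u \<in> I j}" by auto
    then have "g u * real (card {j. j<m \<and> u \<in> I j}) = (\<Sum>j\<in>{j\<in>{..<m}. u \<in> I j}. g u)" by simp
    also have "\<dots> = (\<Sum>j<m. if u \<in> I j then g u else 0)" by (rule sum.inter_filter) (rule finite_lessThan)
    finally show ?thesis .
  qed
  have b: "(\<Sum>u\<in>I j. g u) = (\<Sum>u\<in>K. if u \<in> I j then g u else 0)" if "j < m" for j
  proof -
    have "K \<inter> I j = I j" using sub[OF that] by auto
    then show ?thesis using fK by (simp add: sum.If_cases)
  qed
  have "(\<Sum>u\<in>K. g u * real (card {j. j<m \<and> u \<in> I j})) = (\<Sum>u\<in>K. \<Sum>j<m. if u \<in> I j then g u else 0)"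
    unfolding a ..
  also have "\<dots> = (\<Sum>j<m. \<Sum>u\<in>K. if u \<in> I j then g u else 0)" by (rule sum.swap)
  also have "\<dots> = (\<Sum>j<m. \<Sum>u\<in>I j. g u)" using b by simp
  finally show ?thesis .
qed

lemma card_upd: "card {j. j < Suc n \<and> u \<in> (I(n := A)) j} = card {j. j < n \<and> u \<in> I j} + (if u \<in> A then 1 else 0)"
proof -
  have "{j. j < Suc n \<and> u \<in> (I(n := A)) j} = {j. j < n \<and> u \<in> I j} \<union> (if u \<in> A then {n} else {})"
    by (auto simp: less_Suc_eq)
  moreover have "finite {j. j < n \<and> u \<in> I j}" by simp
  ultimately show ?thesis by (auto simp: card_insert_if)
qed


lemma cover_pad: "cover E w m0 I \<Longrightarrow> m0 \<le> m \<Longrightarrow> \<exists>I'. cover E w m I'"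
proof -
  assume c: "cover E w m0 I" and le: "m0 \<le> m"
  define I' where "I' j = (if j < m0 then I j else {})" for j
  have "{j. j < m0 \<and> v \<in> I j} \<subseteq> {j. j < m \<and> v \<in> I' j}" for v
    using le by (auto simp: I'_def)
  then have "card {j. j < m0 \<and> v \<in> I j} \<le> card {j. j < m \<and> v \<in> I' j}" for v
    by (rule card_mono[rotated]) simp
  then have "w v \<le> card {j. j < m \<and> v \<in> I' j}" for v
    using c unfolding cover_def by (meson order.trans)
  moreover have "\<forall>j<m. I' j \<subseteq> {v. 0 < w v} \<and> is_independent E (I' j)"
    using c unfolding cover_def by (auto simp: I'_def is_independent_def)
  ultimately have "cover E w m I'" unfolding cover_def by blast
  then show ?thesis by blast
qed

lemma base_case:
  assumes sg: "simple_graph V E" and pf: "perfect V E"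
    and supp: "\<And>v. 0 < w v \<Longrightarrow> v \<in> V" and le1: "\<And>v. w v \<le> 1"
    and m: "Om V E w \<le> m"
  shows "\<exists>I. cover E w m I"
proof -
  define S where "S = {v. 0 < w v}"
  have SV: "S \<subseteq> V" using supp by (auto simp: S_def)
  have fV: "finite V" using sg by (simp add: simple_graph_def)
  have fS: "finite S" using SV fV finite_subset by blast
  have irr: "\<not> E x x" for x using sg by (simp add: simple_graph_def)
  obtain h where h: "bij_betw h S {0..<card S}" using ex_bij_betw_finite_nat[OF fS] by blast
  have "proper_colouring E S (card S) h"
    unfolding proper_colouring_def using h irr
    by (auto simp: bij_betw_def inj_on_def dest: bij_betw_apply)
  then have "\<exists>k col. proper_colouring E S k col" by blast
  then have "\<exists>col. proper_colouring E S (chromatic_number E S) col"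
    unfolding chromatic_number_def by (rule LeastI_ex)
  then obtain col where col: "proper_colouring E S (clique_number E S) col"
    using pf SV by (auto simp: perfect_def)
  have finC: "finite {card K | K. K \<subseteq> S \<and> is_clique E K}"
  proof -
    have "{card K | K. K \<subseteq> S \<and> is_clique E K} \<subseteq> card ` Pow S" by auto
    then show ?thesis using fS finite_subset by blast
  qed
  have "clique_number E S \<le> Om V E w"
    unfolding clique_number_def
  proof (rule Max.boundedI[OF finC])
    show "{card K | K. K \<subseteq> S \<and> is_clique E K} \<noteq> {}"
      by (auto simp: is_clique_def intro!: exI[of _ "{}"])
  next
    fix a assume "a \<in> {card K | K. K \<subseteq> S \<and> is_clique E K}"
    then obtain K where K: "a = card K" "K \<subseteq> S" "is_clique E K" by auto
    have w1: "w x = 1" if "x \<in> K" for x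
    proof -
      have "0 < w x" using K(2) that by (auto simp: S_def)
      with le1[of x] show ?thesis by simp
    qed
    have "(\<Sum>u\<in>K. w u) = (\<Sum>u\<in>K. 1)"
      by (rule sum.cong) (use w1 in auto)
    then have "card K = (\<Sum>u\<in>K. w u)" by simp
    also have "\<dots> \<le> Om V E w" by (rule Om_ge[OF fV]) (use K SV in auto)
    finally show "a \<le> Om V E w" using K by simp
  qed
  with m have k: "clique_number E S \<le> m" by simp
  define I where "I j = {v\<in>S. col v = j}" for j
  have "cover E w m I"
    unfolding cover_def
  proof (intro conjI allI impI)
    fix j assume "j < m"
    show "I j \<subseteq> {v. 0 < w v}" by (auto simp: I_def S_def)
    show "is_independent E (I j)" using col
      unfolding I_def is_independent_def proper_colouring_def by fastforce
  next
    fix v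
    show "w v \<le> card {j. j < m \<and> v \<in> I j}"
    proof (cases "v \<in> S")
      case True
      then have "{j. j < m \<and> v \<in> I j} = {col v}" using col k
        by (auto simp: I_def proper_colouring_def)
      then show ?thesis using le1[of v] by simp
    next
      case False
      then show ?thesis by (simp add: S_def)
    qed
  qed
  then show ?thesis by blast
qed


lemma sum_upd_le:
  fixes w :: "'a \<Rightarrow> nat"
  assumes "finite K" "1 \<le> w v"
  shows "sum w K = sum (w(v := w v - 1)) K + (if v \<in> K then 1 else 0)"
proof (cases "v \<in> K")
  case True
  have "sum w K = w v + sum w (K - {v})" using True assms(1) by (simp add: sum.remove)
  moreover have "sum (w(v := w v - 1)) K = (w v - 1) + sum (w(v := w v - 1)) (K - {v})"
    using True assms(1) by (simp add: sum.remove)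
  moreover have "sum (w(v := w v - 1)) (K - {v}) = sum w (K - {v})" by (rule sum.cong) auto
  ultimately show ?thesis using True assms(2) by simp
next
  case False
  have "sum (w(v := w v - 1)) K = sum w K" by (rule sum.cong) (use False in auto)
  then show ?thesis using False by simp
qed

lemma main_cover:
  assumes sg: "simple_graph V E" and pf: "perfect V E"
  shows "(\<And>v. 0 < w v \<Longrightarrow> v \<in> V) \<Longrightarrow> Om V E w \<le> m \<Longrightarrow> \<exists>I. cover E w m I"
proof (induction "sum w V" arbitrary: w m rule: less_induct)
  case less
  have fV: "finite V" using sg by (simp add: simple_graph_def)
  have irr: "\<not> E x x" for x using sg by (simp add: simple_graph_def)
  show ?case
  proof (cases "\<forall>v. w v \<le> 1")
    case True
    then show ?thesis using base_case[OF sg pf] less.prems by blast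
  next
    case False
    then obtain v where v2: "2 \<le> w v" by (metis One_nat_def Suc_1 Suc_leI not_le)
    have vV: "v \<in> V" using less.prems(1)[of v] v2 by simp
    define w' where "w' = w(v := w v - 1)"
    have w'le: "w' u \<le> w u" for u by (simp add: w'_def)
    have w'v: "w' v = w v - 1" by (simp add: w'_def)
    have w'o: "u \<noteq> v \<Longrightarrow> w' u = w u" for u by (simp add: w'_def)
    have supp': "\<And>u. 0 < w' u \<Longrightarrow> u \<in> V" using less.prems(1) w'le
      by (meson less_le_trans)
    have lt: "sum w' V < sum w V"
      using sum_upd_le[OF fV, of w v] v2 vV unfolding w'_def by simp
    have KS: "sum w K = sum w' K + (if v \<in> K then 1 else 0)" if "K \<subseteq> V" for K
      using sum_upd_le[of K w v] v2 finite_subset[OF that fV] unfolding w'_def by simp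
    have Om1: "Om V E w' \<le> Om V E w"
    proof (rule Om_le[OF fV])
      fix K assume K: "K \<subseteq> V" "is_clique E K"
      have "sum w' K \<le> sum w K" using KS[OF K(1)] by simp
      also have "\<dots> \<le> Om V E w" by (rule Om_ge[OF fV K])
      finally show "sum w' K \<le> Om V E w" .
    qed
    have Om2: "Om V E w \<le> Om V E w' + 1"
    proof (rule Om_le[OF fV])
      fix K assume K: "K \<subseteq> V" "is_clique E K"
      have "sum w K \<le> sum w' K + 1" using KS[OF K(1)] by simp
      also have "\<dots> \<le> Om V E w' + 1" using Om_ge[OF fV K, of w'] by simp
      finally show "sum w K \<le> Om V E w' + 1" .
    qed
    show ?thesis
    proof (cases "Om V E w' + 1 \<le> m")
      case True
      then obtain n where n: "m = Suc n" "Om V E w' \<le> n" by (cases m) auto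
      obtain I' where I': "cover E w' n I'" using less.hyps[OF lt supp' n(2)] by blast
      define I where "I = I'(n := {v})"
      have "cover E w m I"
        unfolding cover_def
      proof (intro conjI allI impI)
        fix j assume "j < m"
        show "I j \<subseteq> {v. 0 < w v}"
        proof (cases "j = n")
          case True then show ?thesis using v2 by (simp add: I_def)
        next
          case False
          then have "j < n" using \<open>j < m\<close> n by simp
          then have "I' j \<subseteq> {u. 0 < w' u}" using I' unfolding cover_def by blast
          then show ?thesis using False w'le unfolding I_def by (auto intro: less_le_trans)
        qed
        show "is_independent E (I j)"
          using I' irr \<open>j < m\<close> n(1) unfolding cover_def I_def is_independent_def
          by (auto simp: less_Suc_eq)
      next
        fix u
        have "card {j. j < m \<and> u \<in> I j} = card {j. j < n \<and> u \<in> I' j} + (if u \<in> {v} then 1 else 0)"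
          unfolding n(1) I_def by (rule card_upd)
        moreover have "w' u \<le> card {j. j < n \<and> u \<in> I' j}" using I' unfolding cover_def by blast
        ultimately show "w u \<le> card {j. j < m \<and> u \<in> I j}"
          using w'v w'o[of u] by (cases "u = v") auto
      qed
      then show ?thesis by blast
    next
      case False
      then have mEq: "m = Om V E w'" "Om V E w = m" using less.prems(2) Om1 Om2 by auto
      obtain I' where I': "cover E w' m I'" using less.hyps[OF lt supp'] mEq by auto
      have "w' v \<le> card {j. j < m \<and> v \<in> I' j}" using I' unfolding cover_def by blast
      moreover have "1 \<le> w' v" using w'v v2 by simp
      ultimately have "card {j. j < m \<and> v \<in> I' j} \<noteq> 0" by linarith
      then have "{j. j < m \<and> v \<in> I' j} \<noteq> {}" by (metis card.empty)
      then obtain j0 where j0: "j0 < m" "v \<in> I' j0" by blast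
      then obtain n where n: "m = Suc n" by (cases m) auto
      define A where "A = I' j0"
      have Asupp: "A \<subseteq> {u. 0 < w' u}" and Aind: "is_independent E A"
        using I' j0 unfolding cover_def A_def by auto
      have vA: "v \<in> A" using j0 A_def by simp
      define w'' where "w'' u = (if u \<in> A \<and> u \<noteq> v then w' u - 1 else w' u)" for u
      have w''le: "w'' u \<le> w' u" for u by (simp add: w''_def)
      have supp'': "\<And>u. 0 < w'' u \<Longrightarrow> u \<in> V" using supp' w''le by (meson less_le_trans)
      have lt2: "sum w'' V < sum w V"
        using sum_mono[of V w'' w'] w''le lt by (meson le_less_trans)
      have Om3: "Om V E w'' \<le> n"
      proof (rule Om_le[OF fV])
        fix K assume K: "K \<subseteq> V" "is_clique E K"
        have fK: "finite K" using K(1) fV finite_subset by blast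
        have s1: "sum w'' K \<le> sum w' K" by (rule sum_mono) (rule w''le)
        show "sum w'' K \<le> n"
        proof (cases "sum w' K \<le> n")
          case True then show ?thesis using s1 by simp
        next
          case False
          have "sum w' K \<le> m" using Om_ge[OF fV K] mEq by simp
          with False n have eq: "sum w' K = m" by simp
          have vK: "v \<notin> K"
          proof
            assume "v \<in> K"
            then have "sum w K = m + 1" using KS[OF K(1)] eq by simp
            moreover have "sum w K \<le> m" using Om_ge[OF fV K, of w] mEq by simp
            ultimately show False by simp
          qed
          have "sum w' K \<le> (\<Sum>u\<in>K. card {j. j<m \<and> u \<in> I' j})"
            by (rule sum_mono) (use I' in \<open>auto simp: cover_def\<close>)
          then have "m \<le> (\<Sum>u\<in>K. card {j. j<m \<and> u \<in> I' j})" using eq by simp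
          also have "\<dots> = (\<Sum>j<m. card (K \<inter> I' j))" by (rule count_swap[OF fK])
          also have "\<dots> = card (K \<inter> I' j0) + (\<Sum>j\<in>{..<m} - {j0}. card (K \<inter> I' j))"
            using j0 by (simp add: sum.remove)
          also have "(\<Sum>j\<in>{..<m} - {j0}. card (K \<inter> I' j)) \<le> (\<Sum>j\<in>{..<m} - {j0}. 1)"
            by (rule sum_mono) (use I' K(2) fK clique_indep_card in \<open>auto simp: cover_def\<close>)
          also have "(\<Sum>j\<in>{..<m} - {j0}. 1::nat) = n" using j0 n by simp
          finally have "1 \<le> card (K \<inter> A)" using n unfolding A_def by simp
          then have "K \<inter> A \<noteq> {}" by auto
          then obtain u where u: "u \<in> K" "u \<in> A" by blast
          have uv: "u \<noteq> v" using u vK by auto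
          have w'u: "1 \<le> w' u" using Asupp u(2) by auto
          have "sum w'' K = w'' u + sum w'' (K - {u})" using u fK by (simp add: sum.remove)
          also have "\<dots> \<le> (w' u - 1) + sum w' (K - {u})"
            using sum_mono[of "K - {u}" w'' w'] w''le u uv by (simp add: w''_def)
          also have "\<dots> = sum w' K - 1" using u fK w'u by (simp add: sum.remove)
          finally show ?thesis using eq n by simp
        qed
      qed
      obtain I'' where I'': "cover E w'' n I''" using less.hyps[OF lt2 supp'' Om3] by blast
      define I where "I = I''(n := A)"
      have "cover E w m I"
        unfolding cover_def
      proof (intro conjI allI impI)
        fix j assume j: "j < m"
        show "I j \<subseteq> {v. 0 < w v}"
        proof (cases "j = n")
          case True
          have "0 < w' u \<Longrightarrow> 0 < w u" for u using w'le[of u] by linarith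
          then show ?thesis using True Asupp unfolding I_def by auto
        next
          case False
          then have "j < n" using j n by simp
          then have "I'' j \<subseteq> {u. 0 < w'' u}" using I'' unfolding cover_def by blast
          moreover have "0 < w'' u \<Longrightarrow> 0 < w u" for u using w''le[of u] w'le[of u] by linarith
          ultimately show ?thesis using False unfolding I_def by auto
        qed
        show "is_independent E (I j)"
          using I'' Aind j n unfolding I_def cover_def by (auto simp: less_Suc_eq)
      next
        fix u
        have "card {j. j < m \<and> u \<in> I j} = card {j. j < n \<and> u \<in> I'' j} + (if u \<in> A then 1 else 0)"
          unfolding n(1) I_def by (rule card_upd)
        moreover have "w'' u \<le> card {j. j < n \<and> u \<in> I'' j}" using I'' unfolding cover_def by blast
        moreover have "w u \<le> w'' u + (if u \<in> A then 1 else 0)"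
        proof (cases "u = v")
          case True then show ?thesis using vA w'v v2 by (simp add: w''_def)
        next
          case False
          then show ?thesis using w'o[of u] Asupp by (auto simp: w''_def)
        qed
        ultimately show "w u \<le> card {j. j < m \<and> u \<in> I j}" by simp
      qed
      then show ?thesis by blast
    qed
  qed
qed


lemma f_mono_chain:
  fixes f :: "'a set \<Rightarrow> 'a \<Rightarrow> real"
  assumes mono: "\<And>S v w. S \<subseteq> V \<Longrightarrow> v \<in> S \<Longrightarrow> w \<in> V - S \<Longrightarrow> f S v \<le> f (insert w S) v"
    and fD: "finite D"
  shows "S \<union> D \<subseteq> V \<Longrightarrow> v \<in> S \<Longrightarrow> f S v \<le> f (S \<union> D) v"
  using fD
proof (induction D rule: finite_induct)
  case empty then show ?case by simp
next
  case (insert x D)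
  have ih: "f S v \<le> f (S \<union> D) v" using insert by auto
  show ?case
  proof (cases "x \<in> S \<union> D")
    case True
    then have "S \<union> insert x D = S \<union> D" by auto
    then show ?thesis using ih by simp
  next
    case False
    have "f (S \<union> D) v \<le> f (insert x (S \<union> D)) v"
      by (rule mono) (use insert.prems False in auto)
    then show ?thesis using ih by simp
  qed
qed

theorem theorem7:
  fixes V :: "'a set" and E :: "'a \<Rightarrow> 'a \<Rightarrow> bool" and f :: "'a set \<Rightarrow> 'a \<Rightarrow> real"
  assumes "simple_graph V E"
    and "perfect V E"
    and pos: "\<And>S v. S \<subseteq> V \<Longrightarrow> v \<in> S \<Longrightarrow> f S v > 0"
    and mono: "\<And>S v w. S \<subseteq> V \<Longrightarrow> v \<in> S \<Longrightarrow> w \<in> V - S \<Longrightarrow> f S v \<le> f (insert w S) v"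
    and indep: "\<And>S. S \<subseteq> V \<Longrightarrow> is_independent E S \<Longrightarrow> (\<Sum>v\<in>S. 1 / f S v) \<le> 1"
    and "H \<subseteq> V"
  shows "(\<Sum>v\<in>H. 1 / (f H v * real (max_clique_at E H v))) \<le> 1"
proof -
  note sg = assms(1) and pf = assms(2) and HV = assms(6)
  have fV: "finite V" using sg by (simp add: simple_graph_def)
  have fH: "finite H" using HV fV finite_subset by blast
  define c where "c v = max_clique_at E H v" for v
  have cfin: "finite {card K |K. K \<subseteq> H \<and> v \<in> K \<and> is_clique E K}" for v
  proof -
    have "{card K |K. K \<subseteq> H \<and> v \<in> K \<and> is_clique E K} \<subseteq> card ` Pow H" by auto
    then show ?thesis using fH finite_subset by blast
  qed
  have cge: "card K \<le> c v" if "K \<subseteq> H" "v \<in> K" "is_clique E K" for K v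
    unfolding c_def max_clique_at_def by (rule Max_ge[OF cfin]) (use that in auto)
  have c1: "1 \<le> c v" if "v \<in> H" for v
    using cge[of "{v}" v] that by (simp add: is_clique_def)
  define N where "N = prod c H"
  have Npos: "0 < N" unfolding N_def using c1 by (simp add: prod_pos Suc_le_eq)
  have cdvd: "c v dvd N" if "v \<in> H" for v unfolding N_def using fH that by (rule dvd_prodI)
  define w where "w u = (if u \<in> H then N div c u else 0)" for u
  have wpos: "0 < w u" if "u \<in> H" for u
  proof -
    have "c u \<le> N" using cdvd[OF that] Npos by (rule dvd_imp_le)
    then show ?thesis using c1[OF that] that by (simp add: w_def div_greater_zero_iff)
  qed
  have supp: "0 < w u \<Longrightarrow> u \<in> V" for u using HV by (auto simp: w_def split: if_splits)
  have OmN: "Om V E w \<le> N"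
  proof (rule Om_le[OF fV])
    fix K assume K: "K \<subseteq> V" "is_clique E K"
    have fK: "finite K" using K(1) fV finite_subset by blast
    define K' where "K' = K \<inter> H"
    have "sum w K = (\<Sum>u\<in>K. if u \<in> H then N div c u else 0)" by (simp add: w_def)
    also have "\<dots> = sum (\<lambda>u. N div c u) K'" unfolding K'_def by (rule sum.inter_restrict[OF fK, symmetric])
    finally have sK: "sum w K = sum (\<lambda>u. N div c u) K'" .
    show "sum w K \<le> N"
    proof (cases "K' = {}")
      case True then show ?thesis using sK by simp
    next
      case False
      have fK': "finite K'" using fK by (simp add: K'_def)
      have kpos: "0 < card K'" using False fK' by auto
      have cl': "is_clique E K'" using K(2) by (auto simp: K'_def is_clique_def)
      have "sum (\<lambda>u. N div c u) K' \<le> sum (\<lambda>u. N div card K') K'"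
      proof (rule sum_mono)
        fix u assume u: "u \<in> K'"
        have "card K' \<le> c u" by (rule cge) (use u cl' in \<open>auto simp: K'_def\<close>)
        then show "N div c u \<le> N div card K'" using kpos by (simp add: div_le_mono2)
      qed
      also have "\<dots> = N div card K' * card K'" by simp
      also have "\<dots> \<le> N" by (rule div_times_less_eq_dividend)
      finally show ?thesis using sK by simp
    qed
  qed
  obtain I where I: "cover E w N I" using main_cover[OF sg pf supp OmN] by blast
  have IH: "I j \<subseteq> H" if "j < N" for j
    using I that unfolding cover_def by (auto simp: w_def split: if_splits)
  have Iind: "is_independent E (I j)" if "j < N" for j using I that unfolding cover_def by blast
  define g where "g u = 1 / f H u" for u
  have gnn: "0 \<le> g u" if "u \<in> H" for u using pos[OF HV that] by (simp add: g_def)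
  have Ibound: "(\<Sum>u\<in>I j. g u) \<le> 1" if j: "j < N" for j
  proof -
    have sub: "I j \<subseteq> V" using IH[OF j] HV by blast
    have "(\<Sum>u\<in>I j. g u) \<le> (\<Sum>u\<in>I j. 1 / f (I j) u)"
    proof (rule sum_mono)
      fix u assume u: "u \<in> I j"
      have eqH: "I j \<union> H = H" using IH[OF j] by blast
      have "f (I j) u \<le> f (I j \<union> H) u"
        by (rule f_mono_chain[OF mono fH]) (use HV eqH u in auto)
      then have le: "f (I j) u \<le> f H u" using eqH by simp
      have p: "0 < f (I j) u" using pos[OF sub u] .
      show "g u \<le> 1 / f (I j) u" unfolding g_def using le p
        by (simp add: frac_le)
    qed
    also have "\<dots> \<le> 1" by (rule indep[OF sub Iind[OF j]])
    finally show ?thesis .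
  qed
  have tm: "1 / (f H u * real (max_clique_at E H u)) = g u * real (w u) / real N" if u: "u \<in> H" for u
  proof -
    have rw: "real (w u) = real N / real (c u)" using u cdvd[OF u] by (simp add: w_def real_of_nat_div)
    have "0 < real (c u)" using c1[OF u] by simp
    moreover have "0 < f H u" using pos[OF HV u] .
    ultimately show ?thesis unfolding rw g_def c_def[symmetric] using Npos by (simp add: field_simps)
  qed
  have "(\<Sum>v\<in>H. 1 / (f H v * real (max_clique_at E H v))) = (\<Sum>u\<in>H. g u * real (w u)) / real N"
    using tm by (simp add: sum_divide_distrib)
  also have "\<dots> \<le> (\<Sum>u\<in>H. g u * real (card {j. j < N \<and> u \<in> I j})) / real N"
  proof (rule divide_right_mono)
    show "(\<Sum>u\<in>H. g u * real (w u)) \<le> (\<Sum>u\<in>H. g u * real (card {j. j < N \<and> u \<in> I j}))"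
    proof (rule sum_mono)
      fix u assume u: "u \<in> H"
      have "w u \<le> card {j. j < N \<and> u \<in> I j}" using I unfolding cover_def by blast
      then show "g u * real (w u) \<le> g u * real (card {j. j < N \<and> u \<in> I j})"
        using gnn[OF u] by (simp add: mult_left_mono)
    qed
  qed simp
  also have "\<dots> \<le> real N / real N"
  proof (rule divide_right_mono)
    have "(\<Sum>u\<in>H. g u * real (card {j. j < N \<and> u \<in> I j})) = (\<Sum>j<N. \<Sum>u\<in>I j. g u)"
      by (rule count_swap_real[OF fH IH])
    also have "(\<Sum>j<N. \<Sum>u\<in>I j. g u) \<le> (\<Sum>j<N. (1::real))"
      by (rule sum_mono) (use Ibound in auto)
    finally show "(\<Sum>u\<in>H. g u * real (card {j. j < N \<and> u \<in> I j})) \<le> real N" by simp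
  qed simp
  also have "real N / real N = 1" using Npos by simp
  finally show ?thesis .
qed

end
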